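(* Let $\mathbf{X}$ be a zero-mean weakly stationary real process with absolutely summable autocovariance, let $\mathbf{h}$ be a real impulse response with $\|\mathbf{h}\|_1<\infty$, and let $Y_t=\sum_{\tau\in\mathbb{Z}}X_{t-\tau}h_\tau$. For $N\ge1$ and $-N\le k\le N-1$ define the truncated output $Y'_k=\sum_{j=-N}^{N-1}h_{k-j}X_j$. Let $\Sigma_{Y_{-N:N-1}}$ and $\Sigma_{Y'_{-N:N-1}}$ be the covariance matrices of the random vectors $(Y_{-N},\dots,Y_{N-1})$ and $(Y'_{-N},\dots,Y'_{N-1})$. Then $$\lim_{N\to\infty}\big|\tau_{2N}(\Sigma_{Y_{-N:N-1}})-\tau_{2N}(\Sigma_{Y'_{-N:N-1}})\big|=0 .$$
   Context: $\tau_n(B)=\mathrm{tr}(B)/n$ for an $n\times n$ matrix $B$. Weakly stationary means constant mean and $\mathbb{E}[X_tX_{t+\tau}]=C_{xx}(\tau)$ independent of $t$. *)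

theory Defs
  imports "HOL-Probability.Probability"
begin

definition covar :: "'a measure \<Rightarrow> ('a \<Rightarrow> real) \<Rightarrow> ('a \<Rightarrow> real) \<Rightarrow> real" where
  "covar M U V = (\<integral>\<omega>. (U \<omega> - (\<integral>x. U x \<partial>M)) * (V \<omega> - (\<integral>x. V x \<partial>M)) \<partial>M)"

definition cov_matrix :: "'a measure \<Rightarrow> (int \<Rightarrow> 'a \<Rightarrow> real) \<Rightarrow> int \<Rightarrow> int \<Rightarrow> real" where
  "cov_matrix M Z i j = covar M (Z i) (Z j)"

definition ntrace :: "int set \<Rightarrow> (int \<Rightarrow> int \<Rightarrow> real) \<Rightarrow> real" where
  "ntrace I B = (\<Sum>i\<in>I. B i i) / real (card I)"

definition filt_out :: "(int \<Rightarrow> 'a \<Rightarrow> real) \<Rightarrow> (int \<Rightarrow> real) \<Rightarrow> int \<Rightarrow> 'a \<Rightarrow> real" where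
  "filt_out X h t \<omega> = (\<Sum>\<^sub>\<infinity>\<tau>\<in>(UNIV::int set). X (t - \<tau>) \<omega> * h \<tau>)"

definition trunc_out :: "(int \<Rightarrow> 'a \<Rightarrow> real) \<Rightarrow> (int \<Rightarrow> real) \<Rightarrow> nat \<Rightarrow> int \<Rightarrow> 'a \<Rightarrow> real" where
  "trunc_out X h N k \<omega> = (\<Sum>j\<in>{-int N..int N - 1}. h (k - j) * X j \<omega>)"

end

theory Submission
  imports Defs
begin


lemma finite_int_subset_Iv:
  fixes F :: "int set" assumes "finite F"
  shows "\<exists>n::nat. F \<subseteq> {-int n..int n}"
proof -
  have "\<exists>b::int. \<forall>y\<in>F. \<bar>y\<bar> \<le> b" using assms
  proof (induction rule: finite_induct)
    case (insert x F)
    then obtain b where "\<forall>y\<in>F. \<bar>y\<bar> \<le> b" by blast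
    then show ?case by (intro exI[of _ "max b \<bar>x\<bar>"]) auto
  qed simp
  then obtain b where b: "\<forall>y\<in>F. \<bar>y\<bar> \<le> b" by blast
  have "F \<subseteq> {-int (nat b)..int (nat b)}"
  proof
    fix y assume "y \<in> F"
    with b have "\<bar>y\<bar> \<le> b" by blast
    then show "y \<in> {-int (nat b)..int (nat b)}" by (auto simp: abs_le_iff)
  qed
  then show ?thesis by blast
qed

lemma filterlim_Iv: "filterlim (\<lambda>n::nat. {-int n..int n}) (finite_subsets_at_top UNIV) sequentially"
  unfolding filterlim_finite_subsets_at_top
proof (safe, goal_cases)
  case (1 X)
  then obtain n where n: "X \<subseteq> {-int n..int n}" using finite_int_subset_Iv by blast
  show ?case using eventually_ge_at_top[of n]
  proof eventually_elim
    case (elim y)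
    have "{-int n..int n} \<subseteq> {-int y..int y}" using elim by simp
    with n have "X \<subseteq> {-int y..int y}" by (rule subset_trans)
    moreover have "finite {-int y..int y}" by simp
    ultimately show ?case by blast
  qed
qed

lemma summable_iff_bdd_Iv:
  fixes f :: "int \<Rightarrow> real"
  shows "f summable_on UNIV \<longleftrightarrow> bdd_above (range (\<lambda>n::nat. \<Sum>a\<in>{-int n..int n}. \<bar>f a\<bar>))"
proof -
  have "f summable_on UNIV \<longleftrightarrow> bdd_above (sum (\<lambda>x. norm (f x)) ` {F. F\<subseteq>UNIV \<and> finite F})"
    unfolding summable_on_iff_abs_summable_on_real[of f] by (rule abs_summable_iff_bdd_above)
  also have "\<dots> \<longleftrightarrow> bdd_above (range (\<lambda>n::nat. \<Sum>a\<in>{-int n..int n}. \<bar>f a\<bar>))"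
  proof
    assume "bdd_above (sum (\<lambda>x. norm (f x)) ` {F. F\<subseteq>UNIV \<and> finite F})"
    then show "bdd_above (range (\<lambda>n::nat. \<Sum>a\<in>{-int n..int n}. \<bar>f a\<bar>))"
      by (rule bdd_above_mono) auto
  next
    assume "bdd_above (range (\<lambda>n::nat. \<Sum>a\<in>{-int n..int n}. \<bar>f a\<bar>))"
    then obtain B where B: "\<And>n::nat. (\<Sum>a\<in>{-int n..int n}. \<bar>f a\<bar>) \<le> B"
      by (auto simp: bdd_above_def)
    show "bdd_above (sum (\<lambda>x. norm (f x)) ` {F. F\<subseteq>UNIV \<and> finite F})"
    proof (rule bdd_aboveI2)
      fix F :: "int set" assume "F \<in> {F. F\<subseteq>UNIV \<and> finite F}"
      then have "finite F" by auto
      then obtain n where n: "F \<subseteq> {-int n..int n}" using finite_int_subset_Iv by blast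
      have "(\<Sum>x\<in>F. norm (f x)) \<le> (\<Sum>a\<in>{-int n..int n}. \<bar>f a\<bar>)"
        unfolding real_norm_def by (rule sum_mono2) (use n in auto)
      also have "\<dots> \<le> B" by (rule B)
      finally show "(\<Sum>x\<in>F. norm (f x)) \<le> B" .
    qed
  qed
  finally show ?thesis .
qed

lemma summable_Iv_tendsto:
  fixes f :: "int \<Rightarrow> real"
  assumes "f summable_on UNIV"
  shows "(\<lambda>n::nat. \<Sum>a\<in>{-int n..int n}. f a) \<longlonglongrightarrow> infsum f UNIV"
proof -
  have "(sum f \<longlongrightarrow> infsum f UNIV) (finite_subsets_at_top UNIV)"
    using assms has_sum_def has_sum_infsum by blast
  from filterlim_compose[OF this filterlim_Iv] show ?thesis by (simp add: o_def)
qed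

lemma infsum_le_total:
  fixes g :: "int \<Rightarrow> real"
  assumes nn: "\<And>a. 0 \<le> g a" and sm: "g summable_on UNIV"
  shows "infsum g B \<le> infsum g UNIV"
  by (rule infsum_mono2) (use sm summable_on_subset_banach nn in auto)

lemma tail_avg:
  fixes g :: "int \<Rightarrow> real"
  assumes nn: "\<And>a. 0 \<le> g a" and sm: "g summable_on UNIV"
  shows "(\<lambda>N::nat. (\<Sum>k\<in>{-int N..int N - 1}. infsum g (- {k - int N + 1..k + int N})) / real (2*N)) \<longlonglongrightarrow> 0"
proof (rule LIMSEQ_I)
  fix r :: real assume r: "0 < r"
  define H where "H = infsum g UNIV"
  have H0: "0 \<le> H" unfolding H_def by (rule infsum_nonneg) (use nn in auto)
  have TH: "infsum g B \<le> H" for B unfolding H_def by (rule infsum_le_total[OF nn sm])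
  have Tnn: "0 \<le> infsum g B" for B by (rule infsum_nonneg) (use nn in auto)
  from summable_Iv_tendsto[OF sm] have "\<exists>M. \<forall>n\<ge>M. norm ((\<Sum>a\<in>{-int n..int n}. g a) - H) < r/2"
    unfolding H_def using r by (intro LIMSEQ_D) auto
  then obtain M where M: "norm ((\<Sum>a\<in>{-int M..int M}. g a) - H) < r/2" by blast
  define t where "t = infsum g (- {-int M..int M})"
  have "H = infsum g ({-int M..int M} \<union> - {-int M..int M})" unfolding H_def by simp
  also have "\<dots> = (\<Sum>a\<in>{-int M..int M}. g a) + t"
    unfolding t_def by (subst infsum_Un_disjoint) (use sm summable_on_subset_banach in auto)
  finally have t: "t < r/2" using M by auto
  have t0: "0 \<le> t" unfolding t_def by (rule Tnn)
  obtain N0 :: nat where N0: "2 * real M * H / r < real N0" using reals_Archimedean2 by blast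
  show "\<exists>no. \<forall>N\<ge>no. norm ((\<Sum>k\<in>{-int N..int N - 1}. infsum g (- {k - int N + 1..k + int N})) / real (2*N) - 0) < r"
  proof (intro exI[of _ "N0 + 1"] allI impI)
    fix N :: nat assume N: "N \<ge> N0 + 1"
    define I where "I = {-int N..int N - 1}"
    define Bad where "Bad = {-int N..int M - int N - 1} \<union> {int N - int M..int N - 1}"
    have cardI: "card I = 2 * N" unfolding I_def by simp
    have cardBad: "card (I \<inter> Bad) \<le> 2 * M"
    proof -
      have "card (I \<inter> Bad) \<le> card Bad" by (rule card_mono) (auto simp: Bad_def)
      also have "\<dots> \<le> card {-int N..int M - int N - 1} + card {int N - int M..int N - 1}"
        unfolding Bad_def by (rule card_Un_le)
      also have "\<dots> = 2 * M" by simp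
      finally show ?thesis .
    qed
    have per: "infsum g (- {k - int N + 1..k + int N}) \<le> t + (if k \<in> Bad then H else 0)" if k: "k \<in> I" for k
    proof (cases "k \<in> Bad")
      case True
      have "infsum g (- {k - int N + 1..k + int N}) \<le> H" by (rule TH)
      then show ?thesis using True t0 by simp
    next
      case False
      with k have "int M - int N \<le> k" "k \<le> int N - int M - 1" unfolding Bad_def I_def by auto
      then have sub: "- {k - int N + 1..k + int N} \<subseteq> - {-int M..int M}" by auto
      have "infsum g (- {k - int N + 1..k + int N}) \<le> t"
        unfolding t_def by (rule infsum_mono2) (use sm summable_on_subset_banach nn sub in auto)
      then show ?thesis using False by simp
    qed
    have "(\<Sum>k\<in>I. infsum g (- {k - int N + 1..k + int N})) \<le> (\<Sum>k\<in>I. t + (if k \<in> Bad then H else 0))"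
      by (rule sum_mono) (rule per)
    also have "\<dots> = real (card I) * t + (\<Sum>k\<in>I \<inter> Bad. H)"
      by (simp add: sum.distrib sum.inter_restrict[symmetric] I_def)
    also have "\<dots> = real (2*N) * t + real (card (I \<inter> Bad)) * H" using cardI by simp
    also have "\<dots> \<le> real (2*N) * t + real (2*M) * H"
      using cardBad H0 by (intro add_left_mono mult_right_mono) auto
    finally have S: "(\<Sum>k\<in>I. infsum g (- {k - int N + 1..k + int N})) \<le> real (2*N) * t + real (2*M) * H" .
    have Npos: "0 < real N" using N by simp
    have "(\<Sum>k\<in>I. infsum g (- {k - int N + 1..k + int N})) / real (2*N) \<le> (real (2*N) * t + real (2*M) * H) / real (2*N)"
      using S Npos by (intro divide_right_mono) auto
    also have "\<dots> = t + real M * H / real N" using Npos by (simp add: field_simps)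
    also have "\<dots> < r/2 + r/2"
    proof -
      have a: "2 * real M * H < real N0 * r" using N0 r by (simp add: pos_divide_less_eq)
      have "real N0 \<le> real N" using N by simp
      then have "real N0 * r \<le> real N * r" by (rule mult_right_mono) (use r in auto)
      with a have "2 * real M * H < r * real N" by (simp add: mult.commute)
      then have "real M * H / real N < r / 2" using Npos by (simp add: field_simps)
      then show ?thesis using t by linarith
    qed
    finally have up: "(\<Sum>k\<in>I. infsum g (- {k - int N + 1..k + int N})) / real (2*N) < r" by simp
    have lo: "0 \<le> (\<Sum>k\<in>I. infsum g (- {k - int N + 1..k + int N})) / real (2*N)"
      by (intro divide_nonneg_nonneg sum_nonneg Tnn) auto
    show "norm ((\<Sum>k\<in>{-int N..int N - 1}. infsum g (- {k - int N + 1..k + int N})) / real (2*N) - 0) < r"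
      unfolding I_def[symmetric] real_norm_def diff_zero abs_of_nonneg[OF lo] by (rule up)
  qed
qed




lemma ab_le: fixes a b :: real shows "\<bar>a*b\<bar> \<le> a^2 + b^2"
proof -
  have "0 \<le> (\<bar>a\<bar> - \<bar>b\<bar>)^2" by simp
  hence "2*(\<bar>a\<bar>*\<bar>b\<bar>) \<le> a^2 + b^2" by (simp add: power2_eq_square algebra_simps)
  moreover have "0 \<le> \<bar>a\<bar>*\<bar>b\<bar>" by simp
  ultimately have "\<bar>a\<bar>*\<bar>b\<bar> \<le> a^2 + b^2" by linarith
  then show ?thesis by (simp add: abs_mult)
qed

lemma le_sq1: fixes x :: real shows "x \<le> 1 + x^2"
proof -
  have "0 \<le> (x - 1/2)^2" by simp
  thus ?thesis by (simp add: power2_eq_square algebra_simps)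
qed

locale setting = prob_space M for M :: "'a measure" +
  fixes X :: "int \<Rightarrow> 'a \<Rightarrow> real" and C :: "int \<Rightarrow> real" and h :: "int \<Rightarrow> real"
  assumes Xm[measurable]: "\<And>t. X t \<in> borel_measurable M"
  and Xsq: "\<And>t. integrable M (\<lambda>\<omega>. (X t \<omega>)\<^sup>2)"
  and Xmean: "\<And>t. (\<integral>\<omega>. X t \<omega> \<partial>M) = 0"
  and Xcov: "\<And>t \<tau>. (\<integral>\<omega>. X t \<omega> * X (t + \<tau>) \<omega> \<partial>M) = C \<tau>"
  and Csum: "(\<lambda>\<tau>. \<bar>C \<tau>\<bar>) summable_on UNIV"
  and hsum: "(\<lambda>\<tau>. \<bar>h \<tau>\<bar>) summable_on UNIV"
begin

lemma X_int: "integrable M (X t)"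
  by (rule square_integrable_imp_integrable[OF Xm Xsq])

lemma XX_int: "integrable M (\<lambda>\<omega>. X s \<omega> * X t \<omega>)"
  by (rule Bochner_Integration.integrable_bound[where f="\<lambda>\<omega>. (X s \<omega>)^2 + (X t \<omega>)^2"])
     (auto intro!: Xsq simp: ab_le)

lemma XX_cov: "(\<integral>\<omega>. X s \<omega> * X t \<omega> \<partial>M) = C (t - s)"
  using Xcov[of s "t - s"] by simp

lemma Xsq_eq: "(\<integral>\<omega>. (X t \<omega>)^2 \<partial>M) = C 0"
  using Xcov[of t 0] by (simp add: power2_eq_square)

lemma C0_nn: "0 \<le> C 0"
  using Xsq_eq[of 0] by (metis integral_nonneg_AE zero_le_power2 AE_I2)

lemma XX_abs: "(\<integral>\<omega>. \<bar>X s \<omega> * X t \<omega>\<bar> \<partial>M) \<le> 2 * C 0"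
proof -
  have "(\<integral>\<omega>. \<bar>X s \<omega> * X t \<omega>\<bar> \<partial>M) \<le> (\<integral>\<omega>. (X s \<omega>)^2 + (X t \<omega>)^2 \<partial>M)"
    by (rule Bochner_Integration.integral_mono) (auto intro!: XX_int Xsq simp: ab_le)
  also have "\<dots> = 2 * C 0" using Xsq Xsq_eq by simp
  finally show ?thesis .
qed

definition "S A k \<omega> = (\<Sum>a\<in>A. X (k - a) \<omega> * h a)"
definition "W A k \<omega> = (\<Sum>a\<in>A. \<bar>X (k - a) \<omega>\<bar> * \<bar>h a\<bar>)"
definition "F A = (\<Sum>a\<in>A. \<Sum>b\<in>A. h a * h b * C (a - b))"
definition "H = infsum (\<lambda>a. \<bar>h a\<bar>) UNIV"
definition "Cm = infsum (\<lambda>a. \<bar>C a\<bar>) UNIV"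

lemma S_meas[measurable]: "S A k \<in> borel_measurable M"
  unfolding S_def by measurable

lemma W_meas[measurable]: "W A k \<in> borel_measurable M"
  unfolding W_def by measurable

lemma H_nn: "0 \<le> H" unfolding H_def by (rule infsum_nonneg) auto
lemma Cm_nn: "0 \<le> Cm" unfolding Cm_def by (rule infsum_nonneg) auto

lemma C_le: "\<bar>C x\<bar> \<le> Cm"
proof -
  have "sum (\<lambda>a. \<bar>C a\<bar>) {x} \<le> Cm" unfolding Cm_def
    by (rule finite_sum_le_infsum) (use Csum in auto)
  then show ?thesis by simp
qed

lemma sumh_le: "finite A \<Longrightarrow> (\<Sum>a\<in>A. \<bar>h a\<bar>) \<le> H"
  unfolding H_def by (rule finite_sum_le_infsum) (use hsum in auto)

lemma S_int: "finite A \<Longrightarrow> integrable M (S A k)"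
  unfolding S_def by (intro Bochner_Integration.integrable_sum integrable_mult_left X_int)

lemma S_mean: "finite A \<Longrightarrow> (\<integral>\<omega>. S A k \<omega> \<partial>M) = 0"
  unfolding S_def by (subst Bochner_Integration.integral_sum) (auto intro!: integrable_mult_left X_int simp: Xmean)

lemma S_sq_eq: "(S A k \<omega>)^2 = (\<Sum>a\<in>A. \<Sum>b\<in>A. (X (k-a) \<omega> * X (k-b) \<omega>) * (h a * h b))"
  unfolding S_def power2_eq_square sum_product by (simp add: mult_ac)

lemma W_sq_eq: "(W A k \<omega>)^2 = (\<Sum>a\<in>A. \<Sum>b\<in>A. \<bar>X (k-a) \<omega> * X (k-b) \<omega>\<bar> * (\<bar>h a\<bar> * \<bar>h b\<bar>))"
  unfolding W_def power2_eq_square sum_product by (simp add: mult_ac abs_mult)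

lemma S_sq_int: "integrable M (\<lambda>\<omega>. (S A k \<omega>)^2)"
  unfolding S_sq_eq by (intro Bochner_Integration.integrable_sum integrable_mult_left XX_int)

lemma S_sq: "(\<integral>\<omega>. (S A k \<omega>)^2 \<partial>M) = F A"
  unfolding S_sq_eq F_def
  by (simp add: Bochner_Integration.integral_sum XX_int XX_cov mult_ac)

lemma W_sq_int: "integrable M (\<lambda>\<omega>. (W A k \<omega>)^2)"
  unfolding W_sq_eq by (intro Bochner_Integration.integrable_sum integrable_mult_left integrable_abs XX_int)

lemma W_sq: assumes "finite A" shows "(\<integral>\<omega>. (W A k \<omega>)^2 \<partial>M) \<le> 2 * C 0 * H^2"
proof -
  have "(\<integral>\<omega>. (W A k \<omega>)^2 \<partial>M) = (\<Sum>a\<in>A. \<Sum>b\<in>A. (\<integral>\<omega>. \<bar>X (k-a) \<omega> * X (k-b) \<omega>\<bar> \<partial>M) * (\<bar>h a\<bar> * \<bar>h b\<bar>))"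
    unfolding W_sq_eq by (simp add: Bochner_Integration.integral_sum XX_int)
  also have "\<dots> \<le> (\<Sum>a\<in>A. \<Sum>b\<in>A. (2 * C 0) * (\<bar>h a\<bar> * \<bar>h b\<bar>))"
    by (intro sum_mono mult_right_mono XX_abs) auto
  also have "\<dots> = 2 * C 0 * (\<Sum>a\<in>A. \<bar>h a\<bar>)^2"
    by (simp add: power2_eq_square sum_product sum_distrib_left mult_ac)
  also have "\<dots> \<le> 2 * C 0 * H^2"
    using sumh_le[OF assms] C0_nn by (intro mult_left_mono power_mono) auto
  finally show ?thesis .
qed

end



context setting begin

abbreviation "Iv n \<equiv> {-int n..int n}"

definition "G k \<omega> = (SUP n. ennreal ((W (Iv n) k \<omega>)^2))"
definition "w k \<omega> = enn2real (G k \<omega>)"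

lemma G_meas[measurable]: "G k \<in> borel_measurable M"
  unfolding G_def by measurable

lemma w_meas[measurable]: "w k \<in> borel_measurable M"
  unfolding w_def by measurable

lemma W_nn: "0 \<le> W A k \<omega>" unfolding W_def by (intro sum_nonneg) auto

lemma W_mono: "A \<subseteq> B \<Longrightarrow> finite B \<Longrightarrow> W A k \<omega> \<le> W B k \<omega>"
  unfolding W_def by (rule sum_mono2) auto

lemma G_int: "(\<integral>\<^sup>+\<omega>. G k \<omega> \<partial>M) \<le> ennreal (2 * C 0 * H^2)"
proof -
  have inc: "incseq (\<lambda>n \<omega>. ennreal ((W (Iv n) k \<omega>)^2))"
    by (auto simp: incseq_def le_fun_def intro!: ennreal_leI power_mono W_mono W_nn)
  have "(\<integral>\<^sup>+\<omega>. G k \<omega> \<partial>M) = (SUP n. \<integral>\<^sup>+\<omega>. ennreal ((W (Iv n) k \<omega>)^2) \<partial>M)"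
    unfolding G_def by (rule nn_integral_monotone_convergence_SUP[OF inc]) measurable
  also have "\<dots> \<le> ennreal (2 * C 0 * H^2)"
  proof (rule SUP_least)
    fix n
    have "(\<integral>\<^sup>+\<omega>. ennreal ((W (Iv n) k \<omega>)^2) \<partial>M) = ennreal (\<integral>\<omega>. (W (Iv n) k \<omega>)^2 \<partial>M)"
      by (rule nn_integral_eq_integral[OF W_sq_int]) auto
    also have "\<dots> \<le> ennreal (2 * C 0 * H^2)" by (intro ennreal_leI W_sq) auto
    finally show "(\<integral>\<^sup>+\<omega>. ennreal ((W (Iv n) k \<omega>)^2) \<partial>M) \<le> ennreal (2 * C 0 * H^2)" .
  qed
  finally show ?thesis .
qed

lemma G_fin: "AE \<omega> in M. G k \<omega> < \<top>"
proof -
  have "(\<integral>\<^sup>+\<omega>. G k \<omega> \<partial>M) \<noteq> \<infinity>" using G_int[of k]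
    by (metis ennreal_less_top infinity_ennreal_def top.not_eq_extremum order_le_less_trans)
  from nn_integral_PInf_AE[OF G_meas this] show ?thesis
    by eventually_elim (simp add: less_top)
qed

lemma w_int: "integrable M (w k)"
proof (rule integrableI_nonneg)
  show "AE x in M. 0 \<le> w k x" by (simp add: w_def)
  have "(\<integral>\<^sup>+x. ennreal (w k x) \<partial>M) \<le> (\<integral>\<^sup>+\<omega>. G k \<omega> \<partial>M)"
    by (rule nn_integral_mono) (simp add: w_def ennreal_enn2real_if)
  also have "\<dots> < \<infinity>" using G_int[of k]
    by (metis ennreal_less_top infinity_ennreal_def order_le_less_trans)
  finally show "(\<integral>\<^sup>+x. ennreal (w k x) \<partial>M) < \<infinity>" .
qed simp

lemma W_le_w: assumes "G k \<omega> < \<top>" shows "(W (Iv n) k \<omega>)^2 \<le> w k \<omega>"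
proof -
  have "ennreal ((W (Iv n) k \<omega>)^2) \<le> G k \<omega>" unfolding G_def by (rule SUP_upper) auto
  from enn2real_mono[OF this assms] show ?thesis by (simp add: w_def)
qed

lemma S_abs_le: "\<bar>S A k \<omega>\<bar> \<le> W A k \<omega>"
  unfolding S_def W_def by (rule order_trans[OF sum_abs]) (simp add: abs_mult)

lemma summable_at: assumes "G k \<omega> < \<top>" shows "(\<lambda>a. X (k - a) \<omega> * h a) summable_on UNIV"
proof -
  have "bdd_above (range (\<lambda>n::nat. \<Sum>a\<in>Iv n. \<bar>X (k - a) \<omega> * h a\<bar>))"
  proof (rule bdd_aboveI2)
    fix n :: nat
    have "(\<Sum>a\<in>Iv n. \<bar>X (k - a) \<omega> * h a\<bar>) = W (Iv n) k \<omega>" by (simp add: W_def abs_mult)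
    also have "\<dots> \<le> 1 + (W (Iv n) k \<omega>)^2" by (rule le_sq1)
    also have "\<dots> \<le> 1 + w k \<omega>" using W_le_w[OF assms] by simp
    finally show "(\<Sum>a\<in>Iv n. \<bar>X (k - a) \<omega> * h a\<bar>) \<le> 1 + w k \<omega>" .
  qed
  then show ?thesis using summable_iff_bdd_Iv by blast
qed

lemma not_summable_at: assumes "G k \<omega> = \<top>" shows "\<not> (\<lambda>a. X (k - a) \<omega> * h a) summable_on UNIV"
proof
  assume "(\<lambda>a. X (k - a) \<omega> * h a) summable_on UNIV"
  then obtain B where B: "\<And>n::nat. (\<Sum>a\<in>Iv n. \<bar>X (k - a) \<omega> * h a\<bar>) \<le> B"
    using summable_iff_bdd_Iv by (auto simp: bdd_above_def)
  have "G k \<omega> \<le> ennreal (B^2)" unfolding G_def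
  proof (rule SUP_least)
    fix n
    have "W (Iv n) k \<omega> \<le> B" using B[of n] by (simp add: W_def abs_mult)
    then show "ennreal ((W (Iv n) k \<omega>)^2) \<le> ennreal (B^2)"
      by (intro ennreal_leI power_mono W_nn)
  qed
  then show False using assms by (simp add: top_unique)
qed

lemma S_tendsto: assumes "G k \<omega> < \<top>" shows "(\<lambda>n. S (Iv n) k \<omega>) \<longlonglongrightarrow> filt_out X h k \<omega>"
  unfolding S_def filt_out_def by (rule summable_Iv_tendsto[OF summable_at[OF assms]])

lemma filt_out_eq: "filt_out X h k \<omega> = (if G k \<omega> < \<top> then lim (\<lambda>n. S (Iv n) k \<omega>) else 0)"
proof (cases "G k \<omega> < \<top>")
  case True then show ?thesis using S_tendsto limI by (metis)
next
  case False then have "G k \<omega> = \<top>" using top.not_eq_extremum by blast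
  then show ?thesis unfolding filt_out_def using False not_summable_at infsum_not_exists by metis
qed

lemma Y_meas[measurable]: "filt_out X h k \<in> borel_measurable M"
  unfolding filt_out_eq[abs_def] by measurable

lemma Y_int: "integrable M (filt_out X h k)"
  and Y_mean: "(\<integral>\<omega>. filt_out X h k \<omega> \<partial>M) = 0"
proof -
  have lim: "AE \<omega> in M. (\<lambda>n. S (Iv n) k \<omega>) \<longlonglongrightarrow> filt_out X h k \<omega>"
    using G_fin[of k] by eventually_elim (rule S_tendsto)
  have bnd: "AE \<omega> in M. norm (S (Iv n) k \<omega>) \<le> w k \<omega> + 1" for n
    using G_fin[of k]
  proof eventually_elim
    case (elim \<omega>)
    have "\<bar>S (Iv n) k \<omega>\<bar> \<le> W (Iv n) k \<omega>" by (rule S_abs_le)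
    also have "\<dots> \<le> 1 + (W (Iv n) k \<omega>)^2" by (rule le_sq1)
    also have "\<dots> \<le> 1 + w k \<omega>" using W_le_w[OF elim] by simp
    finally show ?case by simp
  qed
  have wi: "integrable M (\<lambda>\<omega>. w k \<omega> + 1)" by (intro Bochner_Integration.integrable_add w_int) simp
  show "integrable M (filt_out X h k)"
    by (rule integrable_dominated_convergence[OF Y_meas S_meas wi lim bnd])
  have "(\<lambda>n. \<integral>\<omega>. S (Iv n) k \<omega> \<partial>M) \<longlonglongrightarrow> (\<integral>\<omega>. filt_out X h k \<omega> \<partial>M)"
    by (rule integral_dominated_convergence[OF Y_meas S_meas wi lim bnd])
  moreover have "(\<lambda>n. \<integral>\<omega>. S (Iv n) k \<omega> \<partial>M) = (\<lambda>n. 0)" by (simp add: S_mean)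
  ultimately show "(\<integral>\<omega>. filt_out X h k \<omega> \<partial>M) = 0" by (simp add: LIMSEQ_const_iff)
qed

lemma F_tendsto_Y: "(\<lambda>n. F (Iv n)) \<longlonglongrightarrow> (\<integral>\<omega>. (filt_out X h k \<omega>)^2 \<partial>M)"
proof -
  have lim: "AE \<omega> in M. (\<lambda>n. (S (Iv n) k \<omega>)^2) \<longlonglongrightarrow> (filt_out X h k \<omega>)^2"
    using G_fin[of k] by eventually_elim (intro tendsto_power S_tendsto)
  have bnd: "AE \<omega> in M. norm ((S (Iv n) k \<omega>)^2) \<le> w k \<omega>" for n
    using G_fin[of k]
  proof eventually_elim
    case (elim \<omega>)
    have "(S (Iv n) k \<omega>)^2 \<le> (W (Iv n) k \<omega>)^2"
      using S_abs_le by (metis abs_le_square_iff abs_of_nonneg W_nn)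
    also have "\<dots> \<le> w k \<omega>" using W_le_w[OF elim] .
    finally show ?case by simp
  qed
  have "(\<lambda>n. \<integral>\<omega>. (S (Iv n) k \<omega>)^2 \<partial>M) \<longlonglongrightarrow> (\<integral>\<omega>. (filt_out X h k \<omega>)^2 \<partial>M)"
    by (rule integral_dominated_convergence[OF _ _ w_int lim bnd]) measurable
  then show ?thesis by (simp add: S_sq)
qed

definition "R = lim (\<lambda>n. F (Iv n))"

lemma F_tendsto: "(\<lambda>n. F (Iv n)) \<longlonglongrightarrow> R"
  unfolding R_def using F_tendsto_Y[of 0] by (metis limI)

lemma cov_Y: "cov_matrix M (filt_out X h) k k = R"
proof -
  have "cov_matrix M (filt_out X h) k k = (\<integral>\<omega>. (filt_out X h k \<omega>)^2 \<partial>M)"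
    unfolding cov_matrix_def covar_def Y_mean by (simp add: power2_eq_square)
  also have "\<dots> = R" using F_tendsto_Y[of k] F_tendsto LIMSEQ_unique by blast
  finally show ?thesis .
qed

end



context setting begin

lemma trunc_eq: "trunc_out X h N k = S {k - int N + 1..k + int N} k"
proof
  fix \<omega>
  show "trunc_out X h N k \<omega> = S {k - int N + 1..k + int N} k \<omega>"
    unfolding trunc_out_def S_def
    by (rule sum.reindex_bij_witness[where i="\<lambda>j. k - j" and j="\<lambda>a. k - a"]) auto
qed

lemma cov_trunc: "cov_matrix M (trunc_out X h N) k k = F {k - int N + 1..k + int N}"
  unfolding cov_matrix_def covar_def trunc_eq
  using S_sq[of "{k - int N + 1..k + int N}" k] by (simp add: S_mean power2_eq_square)

lemma dsum_bound:
  "\<bar>\<Sum>a\<in>P. \<Sum>b\<in>Q. h a * h b * C (a - b)\<bar> \<le> Cm * ((\<Sum>a\<in>P. \<bar>h a\<bar>) * (\<Sum>b\<in>Q. \<bar>h b\<bar>))"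
proof -
  have "\<bar>\<Sum>a\<in>P. \<Sum>b\<in>Q. h a * h b * C (a - b)\<bar> \<le> (\<Sum>a\<in>P. \<Sum>b\<in>Q. \<bar>h a * h b * C (a - b)\<bar>)"
    by (rule order_trans[OF sum_abs]) (intro sum_mono sum_abs)
  also have "\<dots> \<le> (\<Sum>a\<in>P. \<Sum>b\<in>Q. Cm * (\<bar>h a\<bar> * \<bar>h b\<bar>))"
  proof (intro sum_mono)
    fix a b
    have "\<bar>h a * h b * C (a - b)\<bar> = (\<bar>h a\<bar> * \<bar>h b\<bar>) * \<bar>C (a - b)\<bar>" by (simp add: abs_mult)
    also have "\<dots> \<le> (\<bar>h a\<bar> * \<bar>h b\<bar>) * Cm" by (intro mult_left_mono C_le) auto
    finally show "\<bar>h a * h b * C (a - b)\<bar> \<le> Cm * (\<bar>h a\<bar> * \<bar>h b\<bar>)" by (simp add: mult.commute)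
  qed
  also have "\<dots> = Cm * (\<Sum>a\<in>P. \<Sum>b\<in>Q. \<bar>h a\<bar> * \<bar>h b\<bar>)"
    by (simp add: sum_distrib_left)
  also have "\<dots> = Cm * ((\<Sum>a\<in>P. \<bar>h a\<bar>) * (\<Sum>b\<in>Q. \<bar>h b\<bar>))"
    by (simp only: sum_product)
  finally show ?thesis .
qed

definition "T A = infsum (\<lambda>a. \<bar>h a\<bar>) (- A)"

lemma T_nn: "0 \<le> T A" unfolding T_def by (rule infsum_nonneg) auto

lemma sum_diff_le_T: "finite B \<Longrightarrow> (\<Sum>a\<in>B - A. \<bar>h a\<bar>) \<le> T A"
  unfolding T_def by (rule finite_sum_le_infsum) (use hsum summable_on_subset_banach in auto)

lemma F_diff: assumes "finite B" "A \<subseteq> B" shows "\<bar>F B - F A\<bar> \<le> 2 * Cm * H * T A"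
proof -
  let ?g = "\<lambda>a b. h a * h b * C (a - b)"
  have fA: "finite A" using assms finite_subset by blast
  have "F B = (\<Sum>a\<in>B - A. \<Sum>b\<in>B. ?g a b) + (\<Sum>a\<in>A. \<Sum>b\<in>B. ?g a b)"
    unfolding F_def by (rule sum.subset_diff[OF assms(2,1)])
  also have "(\<Sum>a\<in>A. \<Sum>b\<in>B. ?g a b) = (\<Sum>a\<in>A. (\<Sum>b\<in>B - A. ?g a b) + (\<Sum>b\<in>A. ?g a b))"
    by (intro sum.cong refl sum.subset_diff[OF assms(2,1)])
  also have "\<dots> = (\<Sum>a\<in>A. \<Sum>b\<in>B - A. ?g a b) + F A"
    unfolding F_def by (simp add: sum.distrib)
  finally have eq: "F B - F A = (\<Sum>a\<in>B - A. \<Sum>b\<in>B. ?g a b) + (\<Sum>a\<in>A. \<Sum>b\<in>B - A. ?g a b)" by simp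
  have p1: "(\<Sum>a\<in>B - A. \<bar>h a\<bar>) * (\<Sum>b\<in>B. \<bar>h b\<bar>) \<le> T A * H"
    by (intro mult_mono sum_diff_le_T sumh_le assms(1) T_nn sum_nonneg) auto
  have p2: "(\<Sum>a\<in>A. \<bar>h a\<bar>) * (\<Sum>b\<in>B - A. \<bar>h b\<bar>) \<le> H * T A"
    by (intro mult_mono sum_diff_le_T sumh_le assms(1) fA H_nn sum_nonneg) auto
  have b1: "\<bar>\<Sum>a\<in>B - A. \<Sum>b\<in>B. ?g a b\<bar> \<le> Cm * (T A * H)"
    by (rule order_trans[OF dsum_bound mult_left_mono[OF p1 Cm_nn]])
  have b2: "\<bar>\<Sum>a\<in>A. \<Sum>b\<in>B - A. ?g a b\<bar> \<le> Cm * (H * T A)"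
    by (rule order_trans[OF dsum_bound mult_left_mono[OF p2 Cm_nn]])
  show ?thesis unfolding eq using b1 b2 by (simp add: algebra_simps)
qed

lemma R_F: assumes "finite A" shows "\<bar>R - F A\<bar> \<le> 2 * Cm * H * T A"
proof (rule LIMSEQ_le_const2)
  show "(\<lambda>n. \<bar>F (Iv n) - F A\<bar>) \<longlonglongrightarrow> \<bar>R - F A\<bar>"
    by (intro tendsto_intros F_tendsto)
  obtain m where m: "A \<subseteq> Iv m" using finite_int_subset_Iv[OF assms] by blast
  show "\<exists>N. \<forall>n\<ge>N. \<bar>F (Iv n) - F A\<bar> \<le> 2 * Cm * H * T A"
  proof (intro exI[of _ m] allI impI)
    fix n assume "m \<le> n"
    then have "A \<subseteq> Iv n" using m by auto
    then show "\<bar>F (Iv n) - F A\<bar> \<le> 2 * Cm * H * T A" by (intro F_diff) auto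
  qed
qed

theorem main:
  "(\<lambda>N. \<bar>ntrace {-int N..int N - 1} (cov_matrix M (filt_out X h))
              - ntrace {-int N..int N - 1} (cov_matrix M (trunc_out X h N))\<bar>)
           \<longlonglongrightarrow> 0"
proof (rule tendsto_sandwich[OF _ _ tendsto_const])
  define avg where "avg N = (\<Sum>k\<in>{-int N..int N - 1}. infsum (\<lambda>a. \<bar>h a\<bar>) (- {k - int N + 1..k + int N})) / real (2*N)" for N :: nat
  have avg: "avg \<longlonglongrightarrow> 0" unfolding avg_def by (rule tail_avg) (use hsum in auto)
  show "(\<lambda>N. 2 * Cm * H * avg N) \<longlonglongrightarrow> 0"
    using tendsto_mult[OF tendsto_const avg, of "2 * Cm * H"] by simp
  show "\<forall>\<^sub>F N in sequentially. 0 \<le> \<bar>ntrace {-int N..int N - 1} (cov_matrix M (filt_out X h))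
              - ntrace {-int N..int N - 1} (cov_matrix M (trunc_out X h N))\<bar>" by simp
  show "\<forall>\<^sub>F N in sequentially. \<bar>ntrace {-int N..int N - 1} (cov_matrix M (filt_out X h))
              - ntrace {-int N..int N - 1} (cov_matrix M (trunc_out X h N))\<bar> \<le> 2 * Cm * H * avg N"
  proof (intro always_eventually allI)
    fix N :: nat
    define I where "I = {-int N..int N - 1}"
    have cI: "card I = 2 * N" unfolding I_def by simp
    have "ntrace I (cov_matrix M (filt_out X h)) - ntrace I (cov_matrix M (trunc_out X h N))
        = (\<Sum>k\<in>I. R - F {k - int N + 1..k + int N}) / real (2*N)"
      unfolding ntrace_def cI cov_Y cov_trunc by (simp add: sum_subtractf diff_divide_distrib)
    then have "\<bar>ntrace I (cov_matrix M (filt_out X h)) - ntrace I (cov_matrix M (trunc_out X h N))\<bar>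
        = \<bar>\<Sum>k\<in>I. R - F {k - int N + 1..k + int N}\<bar> / real (2*N)" by simp
    also have "\<dots> \<le> (\<Sum>k\<in>I. 2 * Cm * H * T {k - int N + 1..k + int N}) / real (2*N)"
      by (intro divide_right_mono order_trans[OF sum_abs] sum_mono R_F) auto
    also have "\<dots> = 2 * Cm * H * avg N"
      unfolding avg_def T_def I_def by (simp add: sum_distrib_left)
    finally show "\<bar>ntrace {-int N..int N - 1} (cov_matrix M (filt_out X h))
              - ntrace {-int N..int N - 1} (cov_matrix M (trunc_out X h N))\<bar> \<le> 2 * Cm * H * avg N"
      unfolding I_def .
  qed
qed

end

theorem mainTheorem8:
  fixes M :: "'a measure" and X :: "int \<Rightarrow> 'a \<Rightarrow> real"
    and C :: "int \<Rightarrow> real" and h :: "int \<Rightarrow> real"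
  assumes "prob_space M"
    and "\<And>t. X t \<in> borel_measurable M"
    and "\<And>t. integrable M (\<lambda>\<omega>. (X t \<omega>)\<^sup>2)"
    and "\<And>t. (\<integral>\<omega>. X t \<omega> \<partial>M) = 0"
    and "\<And>t \<tau>. (\<integral>\<omega>. X t \<omega> * X (t + \<tau>) \<omega> \<partial>M) = C \<tau>"
    and "(\<lambda>\<tau>. \<bar>C \<tau>\<bar>) summable_on UNIV"
    and "(\<lambda>\<tau>. \<bar>h \<tau>\<bar>) summable_on UNIV"
  shows "(\<lambda>N. \<bar>ntrace {-int N..int N - 1} (cov_matrix M (filt_out X h))
              - ntrace {-int N..int N - 1} (cov_matrix M (trunc_out X h N))\<bar>)
           \<longlonglongrightarrow> 0"
proof -
  interpret setting M X C h
    by (rule setting.intro[OF assms(1)]) (unfold_locales; fact assms(2-7))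
  show ?thesis by (rule main)
qed


end
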